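(* Let $A=(a_{ij})_{0\le i,j\le n}$ be a square integer matrix with nonnegative entries such that $F_A=\sum_{i=0}^n\prod_{j=0}^n x_j^{a_{ij}}$ is an invertible polynomial, and let $p$ be a prime with $\det A \mid (p-1)$. Let \[\Xi=\{(A^T)^{-1}\vec v \;:\; \vec v=(v_0,\dots,v_n)\in\mathbb{Z}^{n+1},\ v_0,\dots,v_n\ge 1\}\subset\mathbb{Q}^{n+1}.\] For $\vec\xi=(\xi_0,\dots,\xi_n)\in\Xi$ put $\mathrm{age}(\vec\xi)=\sum_{i=0}^n\xi_i$ and, when all $\xi_i\ge 0$ (so that each $(p-1)\xi_i$ is a nonnegative integer), \[\nu(\vec\xi)=\frac{(p-1)!}{\prod_{i=0}^n\big((p-1)\xi_i\big)!}.\] Let $\nu(A)$ denote the number of points $\vec x\in\mathbb{F}_p^{n+1}$ with $F_A(\vec x)=0$. Then \[\nu(A)\equiv(-1)^n\sum_{\substack{\vec\xi\in\Xi,\ \mathrm{age}(\vec\xi)=1\\ \xi_i\ge 0\ \forall i}}\nu(\vec\xi)\pmod p.\] *)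

theory Defs
  imports "HOL-Analysis.Analysis" "HOL-Number_Theory.Cong"
begin

text \<open>Exponent matrices are indexed by a finite type 'n with CARD('n) = n+1.
  Row i gives the exponents of the i-th monomial.\<close>

definition FA :: "int^'n^'n \<Rightarrow> 'a::comm_semiring_1^'n \<Rightarrow> 'a" where
  "FA A x = (\<Sum>i\<in>UNIV. \<Prod>j\<in>UNIV. (x$j) ^ nat (A$i$j))"

definition FA_partial :: "int^'n^'n \<Rightarrow> 'n \<Rightarrow> complex^'n \<Rightarrow> complex" where
  "FA_partial A k x = (\<Sum>i\<in>UNIV. of_int (A$i$k) * (x$k) ^ (nat (A$i$k) - 1)
        * (\<Prod>j\<in>UNIV - {k}. (x$j) ^ nat (A$i$j)))"

text \<open>Invertible polynomial (Berglund--Huebsch / Kreuzer--Skarke): the exponent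
  matrix is invertible, F_A is quasi-homogeneous with positive rational weights,
  and F_A has an isolated critical point at the origin of C^(n+1).\<close>
definition invertible_poly :: "int^'n^'n \<Rightarrow> bool" where
  "invertible_poly A \<longleftrightarrow>
     det A \<noteq> 0 \<and>
     (\<exists>q::rat^'n. (\<forall>j. q$j > 0) \<and> (\<forall>i. (\<Sum>j\<in>UNIV. of_int (A$i$j) * q$j) = 1)) \<and>
     (\<exists>e>0. \<forall>x::complex^'n. norm x < e \<and> (\<forall>k. FA_partial A k x = 0) \<longrightarrow> x = 0)"

definition ratmat :: "int^'n^'m \<Rightarrow> rat^'n^'m" where
  "ratmat A = (\<chi> i j. of_int (A$i$j))"

definition Xi :: "int^'n^'n \<Rightarrow> (rat^'n) set" where
  "Xi A = {matrix_inv (transpose (ratmat A)) *v (\<chi> i. of_int (v$i)) | v::int^'n. \<forall>i. v$i \<ge> 1}"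

definition age :: "rat^'n \<Rightarrow> rat" where
  "age \<xi> = (\<Sum>i\<in>UNIV. \<xi>$i)"

text \<open>nu(xi) = (p-1)! / prod_i ((p-1) xi_i)!  (an integer, the multinomial coefficient,
  when the (p-1) xi_i are nonnegative integers summing to p-1).\<close>
definition nu_xi :: "nat \<Rightarrow> rat^'n \<Rightarrow> int" where
  "nu_xi p \<xi> = fact (p - 1) div (\<Prod>i\<in>UNIV. fact (nat \<lfloor>of_nat (p - 1) * \<xi>$i\<rfloor>))"

text \<open>Number of F_p-points of F_A = 0 (points represented by integer vectors in [0,p)).\<close>
definition num_zeros :: "int^'n^'n \<Rightarrow> nat \<Rightarrow> nat" where
  "num_zeros A p = card {x::int^'n. (\<forall>i. 0 \<le> x$i \<and> x$i < int p) \<and> int p dvd FA A x}"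

end

theory Submission
  imports Defs "HOL-Number_Theory.Number_Theory" "HOL-Combinatorics.Multiset_Permutations"
begin

lemma psum_bij:
  fixes G :: int and p :: nat
  assumes p: "prime p" and G: "\<not> int p dvd G"
  shows "(\<lambda>y. (G*y) mod int p) ` {0..<int p} = {0..<int p}"
proof -
  have pp: "prime (int p)" using p by simp
  have inj: "inj_on (\<lambda>y. (G*y) mod int p) {0..<int p}"
  proof
    fix a b assume a: "a \<in> {0..<int p}" and b: "b \<in> {0..<int p}" and e: "(G*a) mod int p = (G*b) mod int p"
    then have "int p dvd G*(a-b)" by (metis mod_eq_dvd_iff right_diff_distrib)
    then have "int p dvd (a - b)" using G pp prime_dvd_mult_iff by blast
    then show "a = b" using a b
      by (metis atLeastLessThan_iff mod_eq_dvd_iff mod_pos_pos_trivial)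
  qed
  have sub: "(\<lambda>y. (G*y) mod int p) ` {0..<int p} \<subseteq> {0..<int p}"
    using p prime_gt_0_nat by auto
  show ?thesis using endo_inj_surj[OF _ sub inj] by simp
qed

lemma psum:
  fixes p e :: nat
  assumes p: "prime p"
  shows "[(\<Sum>y\<in>{0..<int p}. y^e) = (if 0 < e \<and> (p-1) dvd e then -1 else 0)] (mod int p)"
proof -
  have pp: "prime (int p)" using p by simp
  have p1: "p > 1" using p prime_gt_1_nat by blast
  show ?thesis
  proof (cases "e = 0")
    case True
    then show ?thesis using p1 by (simp add: cong_def)
  next
    case e0: False
    have split: "(\<Sum>y\<in>{0..<int p}. y^e) = (\<Sum>y\<in>{1..<int p}. y^e)"
    proof -
      have "{0..<int p} = insert 0 {1..<int p}" using p1 by auto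
      then show ?thesis using e0 by simp
    qed
    show ?thesis
    proof (cases "(p-1) dvd e")
      case True
      have "[(\<Sum>y\<in>{1..<int p}. y^e) = (\<Sum>y\<in>{1..<int p}. 1)] (mod int p)"
      proof (rule cong_sum)
        fix y assume y: "y \<in> {1..<int p}"
        define m where "m = nat y"
        have m: "y = int m" "m \<ge> 1" "m < p" using y unfolding m_def by auto
        have nd: "\<not> p dvd m" using m by (auto dest: dvd_imp_le)
        have f: "[m^(p-1) = 1] (mod p)" using fermat_theorem[OF p nd] .
        obtain k where k: "e = (p-1)*k" using True by blast
        have "[m^e = 1] (mod p)" using cong_pow[OF f, of k] by (simp add: k power_mult)
        then have "[int m^e = 1] (mod int p)" by (metis cong_int_iff of_nat_1 of_nat_power)
        then show "[y^e = 1] (mod int p)" using m by simp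
      qed
      moreover have "(\<Sum>y\<in>{1..<int p}. (1::int)) = int p - 1" using p1 by simp
      moreover have "[int p - 1 = -1] (mod int p)" by (simp add: cong_iff_dvd_diff)
      ultimately have "[(\<Sum>y\<in>{1..<int p}. y^e) = -1] (mod int p)" by (metis cong_trans)
      then show ?thesis using True e0 split by simp
    next
      case False
      obtain g where g: "residue_primroot p g" using prime_primitive_root_exists[OF p1 p] by blast
      have ordg: "ord p g = p - 1" and cop: "coprime p g" using g p by (auto simp: residue_primroot_def totient_prime)
      have ng: "\<not> [g^e = 1] (mod p)" using False ordg ord_divides' by (metis One_nat_def)
      define G where "G = int g"
      have ngi: "\<not> [G^e = 1] (mod int p)" using ng unfolding G_def by (metis cong_int_iff of_nat_1 of_nat_power)
      have Gnd: "\<not> int p dvd G" using cop p1 unfolding G_def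
        using coprime_absorb_left[of p g] by auto
      define T where "T = (\<Sum>y\<in>{0..<int p}. y^e)"
      have "T = (\<Sum>y\<in>(\<lambda>y. (G*y) mod int p) ` {0..<int p}. y^e)"
        unfolding T_def using psum_bij[OF p Gnd] by simp
      also have "\<dots> = (\<Sum>y\<in>{0..<int p}. ((G*y) mod int p)^e)"
      proof (rule sum.reindex[unfolded comp_def])
        show "inj_on (\<lambda>y. G * y mod int p) {0..<int p}"
          using psum_bij[OF p Gnd] by (simp add: eq_card_imp_inj_on)
      qed
      finally have T1: "T = (\<Sum>y\<in>{0..<int p}. ((G*y) mod int p)^e)" .
      have "[(\<Sum>y\<in>{0..<int p}. ((G*y) mod int p)^e) = (\<Sum>y\<in>{0..<int p}. G^e * y^e)] (mod int p)"
        by (rule cong_sum) (simp add: cong_def power_mod power_mult_distrib)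
      moreover have eq2: "(\<Sum>y\<in>{0..<int p}. G^e * y^e) = G^e * T" by (simp add: T_def sum_distrib_left)
      ultimately have "[T = G^e * T] (mod int p)" using T1 by metis
      then have "int p dvd T - G^e * T" by (simp add: cong_iff_dvd_diff)
      then have "int p dvd (G^e - 1) * T" by (metis dvd_minus_iff minus_diff_eq left_diff_distrib mult_1)
      moreover have "\<not> int p dvd (G^e - 1)" using ngi by (simp add: cong_iff_dvd_diff)
      ultimately have "int p dvd T" using pp prime_dvd_mult_iff by blast
      then show ?thesis using False unfolding T_def by (simp add: cong_def)
    qed
  qed
qed

lemma vec_prod_sum:
  fixes T :: "'a set" and g :: "'n::finite \<Rightarrow> 'a \<Rightarrow> 'b::comm_semiring_1"
  assumes "finite T"
  shows "(\<Sum>x\<in>{x::'a^'n. \<forall>i. x$i \<in> T}. \<Prod>j\<in>UNIV. g j (x$j)) = (\<Prod>j\<in>UNIV. \<Sum>y\<in>T. g j y)"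
proof -
  have "(\<Prod>j\<in>UNIV. \<Sum>y\<in>T. g j y) = (\<Sum>f\<in>PiE UNIV (\<lambda>_. T). \<Prod>j\<in>UNIV. g j (f j))"
    using prod_sum_PiE[of UNIV "\<lambda>_. T" g] assms by simp
  also have "\<dots> = (\<Sum>x\<in>vec_lambda ` PiE UNIV (\<lambda>_. T). \<Prod>j\<in>UNIV. g j (x$j))"
    by (subst sum.reindex) (auto simp: inj_on_def vec_eq_iff)
  also have "vec_lambda ` PiE UNIV (\<lambda>_. T) = {x::'a^'n. \<forall>i. x$i \<in> T}"
  proof (intro equalityI subsetI)
    fix x :: "'a^'n" assume "x \<in> {x. \<forall>i. x$i \<in> T}"
    then have "vec_nth x \<in> PiE UNIV (\<lambda>_. T)" by auto
    moreover have "x = vec_lambda (vec_nth x)" by simp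
    ultimately show "x \<in> vec_lambda ` PiE UNIV (\<lambda>_. T)" by blast
  qed auto
  finally show ?thesis by simp
qed

lemma pow_sum_lists:
  fixes m :: "'a \<Rightarrow> 'b::comm_semiring_1"
  assumes "finite I"
  shows "(\<Sum>i\<in>I. m i)^N = (\<Sum>xs\<in>{xs. set xs \<subseteq> I \<and> length xs = N}. prod_list (map m xs))"
proof (induction N)
  case 0
  have "{xs. set xs \<subseteq> I \<and> length xs = 0} = {[]}" by auto
  then show ?case by simp
next
  case (Suc N)
  have "(\<Sum>i\<in>I. m i)^Suc N = (\<Sum>xs\<in>{xs. set xs \<subseteq> I \<and> length xs = N}. \<Sum>i\<in>I. m i * prod_list (map m xs))"
    by (simp add: Suc sum_distrib_left sum_distrib_right mult.commute)
  also have "\<dots> = (\<Sum>(xs,i)\<in>{xs. set xs \<subseteq> I \<and> length xs = N} \<times> I. prod_list (map m (i#xs)))"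
    by (simp add: sum.cartesian_product)
  also have "\<dots> = (\<Sum>ys\<in>(\<lambda>(xs, n). n#xs) ` ({xs. set xs \<subseteq> I \<and> length xs = N} \<times> I). prod_list (map m ys))"
    by (subst sum.reindex) (auto simp: inj_on_def case_prod_beta)
  finally show ?case by (simp only: lists_length_Suc_eq)
qed

lemma prod_list_count:
  fixes m :: "'a \<Rightarrow> 'b::comm_monoid_mult"
  assumes "finite I" "set xs \<subseteq> I"
  shows "prod_list (map m xs) = (\<Prod>i\<in>I. m i ^ count (mset xs) i)"
  using assms(2)
proof (induction xs)
  case Nil
  then show ?case by simp
next
  case (Cons x xs)
  have xI: "x \<in> I" using Cons by simp
  have "(\<Prod>i\<in>I. m i ^ count (mset (x#xs)) i) = (\<Prod>i\<in>I. m i ^ count (mset xs) i * (if x = i then m i else 1))"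
    apply (intro prod.cong refl) apply (auto simp: power_add) using mult.commute[of "m x" "m x ^ count (mset xs) x"] by simp
  also have "\<dots> = (\<Prod>i\<in>I. m i ^ count (mset xs) i) * m x"
    using assms(1) xI by (simp add: prod.distrib prod.delta)
  finally show ?case using Cons by (simp add: ac_simps)
qed

lemma sum_count_length:
  "(\<Sum>i\<in>UNIV. count (mset xs) (i::'a::finite)) = length xs"
proof (induction xs)
  case Nil
  then show ?case by simp
next
  case (Cons x xs)
  have "(\<Sum>i\<in>UNIV. count (mset (x#xs)) i) = (\<Sum>i\<in>UNIV. count (mset xs) i + (if x = i then 1 else 0))"
    by (intro sum.cong) auto
  then show ?case using Cons by (simp add: sum.distrib)
qed

lemma det_of_int:
  fixes M :: "int^'n^'n"
  shows "det (\<chi> i j. (of_int (M$i$j) :: 'a::comm_ring_1)) = of_int (det M)"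
  unfolding det_def by (simp add: of_int_sum of_int_prod)

lemma detR:
  fixes A :: "int^'n^'n"
  shows "det (ratmat A) = of_int (det A)"
  unfolding ratmat_def by (rule det_of_int)

lemma detB:
  fixes A :: "int^'n^'n"
  shows "det (transpose (ratmat A)) = of_int (det A)"
  unfolding det_transpose ratmat_def by (rule det_of_int)

lemma matrix_inv_props:
  fixes B :: "'a::field^'n^'n"
  assumes "det B \<noteq> 0"
  shows "B ** matrix_inv B = mat 1" "matrix_inv B ** B = mat 1"
proof -
  have "invertible B" using assms invertible_det_nz by blast
  then have "\<exists>B'. B ** B' = mat 1 \<and> B' ** B = mat 1" unfolding invertible_def by blast
  then have "B ** matrix_inv B = mat 1 \<and> matrix_inv B ** B = mat 1"
    unfolding matrix_inv_def by (rule someI_ex)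
  then show "B ** matrix_inv B = mat 1" "matrix_inv B ** B = mat 1" by auto
qed

lemma Xi_char:
  fixes A :: "int^'n^'n"
  assumes "det A \<noteq> 0"
  shows "\<xi> \<in> Xi A \<longleftrightarrow> (\<exists>v::int^'n. (\<forall>i. v$i \<ge> 1) \<and> transpose (ratmat A) *v \<xi> = (\<chi> i. of_int (v$i)))"
proof -
  let ?B = "transpose (ratmat A)"
  have d: "det ?B \<noteq> 0" unfolding detB using assms by simp
  note mi = matrix_inv_props[OF d]
  show ?thesis
  proof
    assume "\<xi> \<in> Xi A"
    then obtain v :: "int^'n" where v: "\<forall>i. v$i \<ge> 1" "\<xi> = matrix_inv ?B *v (\<chi> i. of_int (v$i))"
      unfolding Xi_def by blast
    then have "?B *v \<xi> = (\<chi> i. of_int (v$i))"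
      by (simp add: matrix_vector_mul_assoc mi)
    then show "\<exists>v::int^'n. (\<forall>i. v$i \<ge> 1) \<and> ?B *v \<xi> = (\<chi> i. of_int (v$i))" using v by blast
  next
    assume "\<exists>v::int^'n. (\<forall>i. v$i \<ge> 1) \<and> ?B *v \<xi> = (\<chi> i. of_int (v$i))"
    then obtain v :: "int^'n" where v: "\<forall>i. v$i \<ge> 1" "?B *v \<xi> = (\<chi> i. of_int (v$i))" by blast
    have "matrix_inv ?B *v (?B *v \<xi>) = \<xi>" by (simp only: matrix_vector_mul_assoc mi matrix_vector_mul_lid)
    then have "\<xi> = matrix_inv ?B *v (\<chi> i. of_int (v$i))" using v by simp
    then show "\<xi> \<in> Xi A" unfolding Xi_def using v by blast
  qed
qed

lemma Xi_integral:
  fixes A :: "int^'n^'n"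
  assumes "det A \<noteq> 0" "\<xi> \<in> Xi A"
  shows "\<exists>d::int. \<xi>$k = of_int d / of_int (det A)"
proof -
  let ?B = "transpose (ratmat A)"
  have d: "det ?B \<noteq> 0" unfolding detB using assms by simp
  obtain v :: "int^'n" where v: "?B *v \<xi> = (\<chi> i. of_int (v$i))"
    using Xi_char[OF assms(1)] assms(2) by blast
  define M :: "int^'n^'n" where "M = (\<chi> i j. if j = k then v$i else A$j$i)"
  have "\<xi> = (\<chi> k. det(\<chi> i j. if j=k then (\<chi> i. of_int (v$i))$i else ?B$i$j) / det ?B)"
    using cramer[OF d] v by blast
  then have "\<xi>$k = det(\<chi> i j. if j=k then (\<chi> i. of_int (v$i))$i else ?B$i$j) / det ?B" by simp
  also have "(\<chi> i j. if j=k then (\<chi> i. of_int (v$i))$i else ?B$i$j) = (\<chi> i j. (of_int (M$i$j) :: rat))"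
    by (simp add: M_def vec_eq_iff transpose_def ratmat_def)
  finally have "\<xi>$k = of_int (det M) / of_int (det A)" by (simp add: det_of_int detR)
  then show ?thesis by blast
qed


definition ee :: "int^'n^'n \<Rightarrow> 'n list \<Rightarrow> 'n \<Rightarrow> nat" where
  "ee A xs j = (\<Sum>i\<in>UNIV. count (mset xs) i * nat (A$i$j))"

definition good :: "int^'n^'n \<Rightarrow> nat \<Rightarrow> 'n list \<Rightarrow> bool" where
  "good A N xs \<longleftrightarrow> (\<forall>j. 0 < ee A xs j \<and> N dvd ee A xs j)"

definition xiof :: "nat \<Rightarrow> 'n list \<Rightarrow> rat^'n" where
  "xiof N xs = (\<chi> i. of_nat (count (mset xs) i) / of_nat N)"

lemma ee_rat:
  fixes A :: "int^'n^'n"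
  assumes "\<forall>i j. A$i$j \<ge> 0"
  shows "(of_nat (ee A xs j) :: rat) = (\<Sum>i\<in>UNIV. of_int (A$i$j) * of_nat (count (mset xs) i))"
  unfolding ee_def of_nat_sum
  by (intro sum.cong refl) (simp add: assms mult.commute)

lemma Bv:
  fixes A :: "int^'n^'n"
  shows "(transpose (ratmat A) *v x)$j = (\<Sum>i\<in>UNIV. of_int (A$i$j) * x$i)"
  by (simp add: matrix_vector_mult_def transpose_def ratmat_def)

lemma good_in_Xi:
  fixes A :: "int^'n^'n" and N :: nat
  assumes nonneg: "\<forall>i j. A$i$j \<ge> 0" and dA: "det A \<noteq> 0" and N0: "N > 0"
    and xs: "length xs = N" "good A N xs"
  shows "xiof N xs \<in> {\<xi>\<in>Xi A. age \<xi> = 1 \<and> (\<forall>i. \<xi>$i \<ge> 0)}"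
proof -
  define v :: "int^'n" where "v = (\<chi> j. int (ee A xs j div N))"
  have v1: "\<forall>j. v$j \<ge> 1"
  proof
    fix j
    have "0 < ee A xs j" "N dvd ee A xs j" using xs(2) good_def by auto
    then obtain k where k: "ee A xs j = N * k" "k > 0" by (metis dvdE mult_0_right neq0_conv less_irrefl)
    then have "ee A xs j div N \<ge> 1" using N0 by simp
    then show "v$j \<ge> 1" unfolding v_def by simp
  qed
  have Bx: "transpose (ratmat A) *v xiof N xs = (\<chi> j. of_int (v$j))"
  proof (subst vec_eq_iff, rule allI)
    fix j
    obtain k where k: "ee A xs j = N * k" using xs(2) good_def by blast
    have "(transpose (ratmat A) *v xiof N xs)$j = (\<Sum>i\<in>UNIV. of_int (A$i$j) * (of_nat (count (mset xs) i) / of_nat N))"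
      unfolding Bv by (simp add: xiof_def)
    also have "\<dots> = (\<Sum>i\<in>UNIV. of_int (A$i$j) * of_nat (count (mset xs) i)) / of_nat N"
      by (simp add: sum_divide_distrib)
    also have "\<dots> = of_nat (ee A xs j) / of_nat N" using ee_rat[OF nonneg] by simp
    also have "\<dots> = of_nat k" using k N0 by simp
    also have "\<dots> = of_int (v$j)" unfolding v_def using k N0 by simp
    finally show "(transpose (ratmat A) *v xiof N xs)$j = (\<chi> j. of_int (v$j))$j" by simp
  qed
  have inXi: "xiof N xs \<in> Xi A" using Xi_char[OF dA] v1 Bx by blast
  have "age (xiof N xs) = (\<Sum>i\<in>UNIV. of_nat (count (mset xs) i)) / of_nat N"
    unfolding age_def xiof_def by (simp add: sum_divide_distrib)
  also have "\<dots> = 1" using sum_count_length[of xs] xs(1) N0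
    by (metis of_nat_0_less_iff of_nat_sum divide_self less_irrefl)
  finally have "age (xiof N xs) = 1" .
  moreover have "\<forall>i. xiof N xs $ i \<ge> 0" by (simp add: xiof_def)
  ultimately show ?thesis using inXi by blast
qed


lemma intg:
  fixes A :: "int^'n^'n" and N :: nat
  assumes dA: "det A \<noteq> 0" and dvdN: "det A dvd int N"
    and \<xi>: "\<xi> \<in> Xi A" "\<xi>$i \<ge> 0"
  shows "(of_nat (nat \<lfloor>of_nat N * \<xi>$i\<rfloor>) :: rat) = of_nat N * \<xi>$i"
proof -
  obtain d where d: "\<xi>$i = of_int d / of_int (det A)" using Xi_integral[OF dA \<xi>(1)] by blast
  obtain q where q: "int N = det A * q" using dvdN by blast
  have "of_nat N * \<xi>$i = of_int (q * d)"
  proof -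
    have "(of_nat N :: rat) = of_int (det A) * of_int q" using q by (metis of_int_mult of_int_of_nat_eq)
    then show ?thesis using d dA by (simp add: field_simps)
  qed
  moreover have "q * d \<ge> 0"
  proof -
    have "of_nat N * \<xi>$i \<ge> 0" using \<xi>(2) by simp
    then show ?thesis using calculation by (metis of_int_0_le_iff of_int_mult)
  qed
  ultimately obtain z where z: "of_nat N * \<xi>$i = (of_int z :: rat)" "z \<ge> 0" by blast
  then have "\<lfloor>of_nat N * \<xi>$i\<rfloor> = z" by simp
  moreover have "of_nat (nat z) = (of_int z :: rat)" using z(2) by (metis of_int_of_nat_eq nat_0_le)
  ultimately show ?thesis using z by simp
qed

lemma fiber_eq:
  fixes A :: "int^'n^'n" and N :: nat
  assumes nonneg: "\<forall>i j. A$i$j \<ge> 0" and dA: "det A \<noteq> 0" and dvdN: "det A dvd int N" and N0: "N > 0"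
    and \<xi>: "\<xi> \<in> {\<xi>\<in>Xi A. age \<xi> = 1 \<and> (\<forall>i. \<xi>$i \<ge> 0)}"
  shows "{xs. set xs \<subseteq> UNIV \<and> length xs = N \<and> good A N xs \<and> xiof N xs = \<xi>}
          = permutations_of_multiset (\<Sum>i\<in>UNIV. replicate_mset (nat \<lfloor>of_nat N * \<xi>$i\<rfloor>) i)"
proof -
  define c where "c = (\<lambda>i. nat \<lfloor>of_nat N * \<xi>$i\<rfloor>)"
  define M where "M = (\<Sum>i\<in>UNIV. replicate_mset (c i) i)"
  have cM: "count M i = c i" for i unfolding M_def by (simp add: count_sum)
  have ic: "(of_nat (c i) :: rat) = of_nat N * \<xi>$i" for i
    unfolding c_def using intg[OF dA dvdN, of \<xi> i] \<xi> by blast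
  have sumc: "(\<Sum>i\<in>UNIV. c i) = N"
  proof -
    have "(of_nat (\<Sum>i\<in>UNIV. c i) :: rat) = of_nat N * age \<xi>"
      unfolding of_nat_sum age_def by (simp add: ic sum_distrib_left)
    then have "(of_nat (\<Sum>i\<in>UNIV. c i) :: rat) = of_nat N" using \<xi> by simp
    then show ?thesis by (simp only: of_nat_eq_iff)
  qed
  obtain v :: "int^'n" where v: "\<forall>i. v$i \<ge> 1" "transpose (ratmat A) *v \<xi> = (\<chi> i. of_int (v$i))"
    using Xi_char[OF dA] \<xi> by blast
  have eqM: "permutations_of_multiset (\<Sum>i\<in>UNIV. replicate_mset (nat \<lfloor>of_nat N * \<xi>$i\<rfloor>) i) = permutations_of_multiset M"
    by (simp add: M_def c_def)
  show ?thesis unfolding eqM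
  proof (intro equalityI subsetI)
    fix xs assume "xs \<in> {xs. set xs \<subseteq> UNIV \<and> length xs = N \<and> good A N xs \<and> xiof N xs = \<xi>}"
    then have x: "xiof N xs = \<xi>" by blast
    have "count (mset xs) i = count M i" for i
    proof -
      have "(of_nat (count (mset xs) i) :: rat) / of_nat N = \<xi>$i" using x unfolding xiof_def by force
      then have "(of_nat (count (mset xs) i) :: rat) = of_nat (c i)" using ic[of i] N0 by (simp add: field_simps)
      then show ?thesis using cM by simp
    qed
    then have "mset xs = M" by (simp add: multiset_eqI)
    then show "xs \<in> permutations_of_multiset M" by (rule permutations_of_multisetI)
  next
    fix xs assume "xs \<in> permutations_of_multiset M"
    then have mx: "mset xs = M" by (rule permutations_of_multisetD)
    then have cx: "count (mset xs) i = c i" for i by (simp add: cM)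
    have len: "length xs = N" using sum_count_length[of xs] sumc cx by simp
    have xx: "xiof N xs = \<xi>" unfolding xiof_def vec_eq_iff using cx ic N0 by (simp add: field_simps)
    have gd: "good A N xs" unfolding good_def
    proof
      fix j
      have "(of_nat (ee A xs j) :: rat) = (\<Sum>i\<in>UNIV. of_int (A$i$j) * (of_nat N * \<xi>$i))"
        unfolding ee_rat[OF nonneg] by (simp add: cx ic)
      also have "\<dots> = of_nat N * (transpose (ratmat A) *v \<xi>)$j"
        unfolding Bv by (simp add: sum_distrib_left algebra_simps)
      also have "\<dots> = of_int (int N * v$j)" using v by simp
      finally have "int (ee A xs j) = int N * v$j" by (metis of_int_eq_iff of_int_of_nat_eq)
      then have "ee A xs j = N * nat (v$j)" using v(1) by (metis nat_int nat_mult_distrib of_nat_0_le_iff nat_int)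
      then show "0 < ee A xs j \<and> N dvd ee A xs j" using N0 v(1)
        by (metis dvd_triv_left nat_0_less_mult_iff zero_less_nat_eq int_one_le_iff_zero_less)
    qed
    show "xs \<in> {xs. set xs \<subseteq> UNIV \<and> length xs = N \<and> good A N xs \<and> xiof N xs = \<xi>}"
      using len xx gd by blast
  qed
qed


lemma fiber_card:
  fixes A :: "int^'n^'n" and N :: nat
  assumes nonneg: "\<forall>i j. A$i$j \<ge> 0" and dA: "det A \<noteq> 0" and dvdN: "det A dvd int N" and N0: "N > 0"
    and \<xi>: "\<xi> \<in> {\<xi>\<in>Xi A. age \<xi> = 1 \<and> (\<forall>i. \<xi>$i \<ge> 0)}"
  shows "int (card {xs. set xs \<subseteq> UNIV \<and> length xs = N \<and> good A N xs \<and> xiof N xs = \<xi>}) = nu_xi (Suc N) \<xi>"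
proof -
  define c where "c = (\<lambda>i. nat \<lfloor>of_nat N * \<xi>$i\<rfloor>)"
  define M where "M = (\<Sum>i\<in>UNIV. replicate_mset (c i) i)"
  have cM: "count M i = c i" for i unfolding M_def by (simp add: count_sum)
  have fe: "{xs. set xs \<subseteq> UNIV \<and> length xs = N \<and> good A N xs \<and> xiof N xs = \<xi>} = permutations_of_multiset M"
    using fiber_eq[OF nonneg dA dvdN N0 \<xi>] unfolding M_def c_def .
  obtain xs where "xs \<in> permutations_of_multiset M"
    using permutations_of_multiset_not_empty by blast
  then have "xs \<in> {xs. set xs \<subseteq> UNIV \<and> length xs = N \<and> good A N xs \<and> xiof N xs = \<xi>}" and "mset xs = M"
    using fe permutations_of_multisetD by auto
  then have sM: "size M = N" by (metis (mono_tags, lifting) mem_Collect_eq size_mset)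
  have pr: "(\<Prod>x\<in>set_mset M. fact (count M x) :: nat) = (\<Prod>x\<in>UNIV. fact (c x))"
  proof -
    have "(\<Prod>x\<in>set_mset M. fact (count M x) :: nat) = (\<Prod>x\<in>UNIV. fact (count M x))"
      by (rule prod.mono_neutral_left) (auto simp: not_in_iff)
    then show ?thesis by (simp add: cM)
  qed
  have "card {xs. set xs \<subseteq> UNIV \<and> length xs = N \<and> good A N xs \<and> xiof N xs = \<xi>} = fact N div (\<Prod>x\<in>UNIV. fact (c x))"
    unfolding fe card_permutations_of_multiset(1) sM pr ..
  then have "int (card {xs. set xs \<subseteq> UNIV \<and> length xs = N \<and> good A N xs \<and> xiof N xs = \<xi>}) = fact N div (\<Prod>x\<in>UNIV. fact (c x))"
    by (simp add: zdiv_int of_nat_prod)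
  then show ?thesis unfolding nu_xi_def c_def by simp
qed

lemma count_good:
  fixes A :: "int^'n^'n" and N :: nat
  assumes nonneg: "\<forall>i j. A$i$j \<ge> 0" and dA: "det A \<noteq> 0" and dvdN: "det A dvd int N" and N0: "N > 0"
  shows "int (card {xs::'n list. set xs \<subseteq> UNIV \<and> length xs = N \<and> good A N xs})
    = (\<Sum>\<xi>\<in>{\<xi>\<in>Xi A. age \<xi> = 1 \<and> (\<forall>i. \<xi>$i \<ge> 0)}. nu_xi (Suc N) \<xi>)"
proof -
  define G where "G = {xs::'n list. set xs \<subseteq> UNIV \<and> length xs = N \<and> good A N xs}"
  define X where "X = {\<xi>\<in>Xi A. age \<xi> = 1 \<and> (\<forall>i. \<xi>$i \<ge> 0)}"
  have fG: "finite G"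
    by (rule finite_subset[OF _ finite_lists_length_eq[of "UNIV::'n set" N]]) (auto simp: G_def)
  have fib: "{x\<in>G. xiof N x = y} = {xs. set xs \<subseteq> UNIV \<and> length xs = N \<and> good A N xs \<and> xiof N xs = y}" for y
    unfolding G_def by auto
  have img: "xiof N ` G = X"
  proof (intro equalityI subsetI)
    fix y assume "y \<in> xiof N ` G"
    then show "y \<in> X" unfolding G_def X_def using good_in_Xi[OF nonneg dA N0] by blast
  next
    fix y assume y: "y \<in> X"
    obtain xs where "xs \<in> permutations_of_multiset (\<Sum>i\<in>UNIV. replicate_mset (nat \<lfloor>of_nat N * y$i\<rfloor>) i)"
      using permutations_of_multiset_not_empty by blast
    then have "xs \<in> {x\<in>G. xiof N x = y}"
      using fiber_eq[OF nonneg dA dvdN N0, of y] y unfolding X_def fib by blast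
    then show "y \<in> xiof N ` G" by blast
  qed
  have "card G = (\<Sum>y\<in>xiof N ` G. card {x\<in>G. xiof N x = y})"
    using sum.image_gen[OF fG, of "\<lambda>_. (1::nat)" "xiof N"] by simp
  then have "int (card G) = (\<Sum>y\<in>X. int (card {x\<in>G. xiof N x = y}))"
    unfolding img by simp
  also have "\<dots> = (\<Sum>y\<in>X. nu_xi (Suc N) y)"
  proof (rule sum.cong[OF refl])
    fix y assume y: "y \<in> X"
    show "int (card {x\<in>G. xiof N x = y}) = nu_xi (Suc N) y"
      unfolding fib by (rule fiber_card[OF nonneg dA dvdN N0]) (use y in \<open>simp add: X_def\<close>)
  qed
  finally show ?thesis unfolding G_def X_def .
qed


lemma vec_set_eq:
  "{x::'a^'n::finite. \<forall>i. x$i \<in> T} = vec_lambda ` PiE UNIV (\<lambda>_. T)"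
proof (intro equalityI subsetI)
  fix x :: "'a^'n" assume "x \<in> {x. \<forall>i. x$i \<in> T}"
  then have "vec_nth x \<in> PiE UNIV (\<lambda>_. T)" by auto
  moreover have "x = vec_lambda (vec_nth x)" by simp
  ultimately show "x \<in> vec_lambda ` PiE UNIV (\<lambda>_. T)" by blast
qed auto

lemma fermat_int:
  fixes a :: int and p :: nat
  assumes p: "prime p" and nd: "\<not> int p dvd a"
  shows "[a^(p-1) = 1] (mod int p)"
proof -
  have p0: "int p > 0" using p prime_gt_0_nat by simp
  define m where "m = nat (a mod int p)"
  have am: "[a = int m] (mod int p)" unfolding m_def using p0 by (simp add: cong_def)
  have "\<not> p dvd m"
  proof
    assume "p dvd m"
    then have "int p dvd int m" by simp
    then have "int p dvd a" using am by (simp add: cong_dvd_iff)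
    then show False using nd by simp
  qed
  then have "[m^(p-1) = 1] (mod p)" using fermat_theorem[OF p] by blast
  then have "[int m^(p-1) = 1] (mod int p)" by (metis cong_int_iff of_nat_1 of_nat_power)
  moreover have "[a^(p-1) = int m^(p-1)] (mod int p)" using am by (rule cong_pow)
  ultimately show ?thesis using cong_trans by blast
qed

lemma FA_pow:
  fixes A :: "int^'n^'n" and x :: "int^'n"
  shows "FA A x ^ N = (\<Sum>xs\<in>{xs::'n list. set xs \<subseteq> UNIV \<and> length xs = N}. \<Prod>j\<in>UNIV. (x$j)^(ee A xs j))"
proof -
  define m where "m = (\<lambda>i. \<Prod>j\<in>UNIV. (x$j) ^ nat (A$i$j))"
  have "FA A x ^ N = (\<Sum>i\<in>UNIV. m i) ^ N" unfolding FA_def m_def ..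
  also have "\<dots> = (\<Sum>xs\<in>{xs::'n list. set xs \<subseteq> UNIV \<and> length xs = N}. prod_list (map m xs))"
    by (rule pow_sum_lists) simp
  also have "\<dots> = (\<Sum>xs\<in>{xs::'n list. set xs \<subseteq> UNIV \<and> length xs = N}. \<Prod>j\<in>UNIV. (x$j)^(ee A xs j))"
  proof (rule sum.cong[OF refl])
    fix xs :: "'n list"
    have "prod_list (map m xs) = (\<Prod>i\<in>UNIV. m i ^ count (mset xs) i)"
      by (rule prod_list_count) auto
    also have "\<dots> = (\<Prod>i\<in>UNIV. \<Prod>j\<in>UNIV. (x$j) ^ (count (mset xs) i * nat (A$i$j)))"
      unfolding m_def by (simp add: prod_power_distrib power_mult[symmetric] mult.commute)
    also have "\<dots> = (\<Prod>j\<in>UNIV. \<Prod>i\<in>UNIV. (x$j) ^ (count (mset xs) i * nat (A$i$j)))"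
      by (rule prod.swap)
    also have "\<dots> = (\<Prod>j\<in>UNIV. (x$j)^(ee A xs j))"
      unfolding ee_def by (simp add: power_sum)
    finally show "prod_list (map m xs) = (\<Prod>j\<in>UNIV. (x$j)^(ee A xs j))" .
  qed
  finally show ?thesis .
qed

theorem proposition3p1:
  fixes A :: "int^'n^'n" and p :: nat
  assumes "\<forall>i j. A$i$j \<ge> 0"
    and "invertible_poly A"
    and "prime p"
    and "det A dvd (int p - 1)"
  shows "[int (num_zeros A p) =
           (-1) ^ (CARD('n) - 1) *
           (\<Sum>\<xi>\<in>{\<xi>\<in>Xi A. age \<xi> = 1 \<and> (\<forall>i. \<xi>$i \<ge> 0)}. nu_xi p \<xi>)] (mod int p)"
proof -
  note nonneg = assms(1) and p = assms(3)
  define N where "N = p - 1"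
  have p1: "p > 1" using p prime_gt_1_nat by blast
  have N0: "N > 0" using p1 unfolding N_def by simp
  have pN: "p = Suc N" using p1 unfolding N_def by simp
  have dA: "det A \<noteq> 0" using assms(2) unfolding invertible_poly_def by blast
  have dvdN: "det A dvd int N" using assms(4) p1 unfolding N_def by (simp add: of_nat_diff)
  define T where "T = {0..<int p}"
  define S where "S = {x::int^'n. \<forall>i. x$i \<in> T}"
  define L where "L = {xs::'n list. set xs \<subseteq> UNIV \<and> length xs = N}"
  define P where "P = (\<lambda>e::nat. if 0 < e \<and> N dvd e then (-1::int) else 0)"
  have fT: "finite T" unfolding T_def by simp
  have fS: "finite S" unfolding S_def vec_set_eq using fT by (simp add: finite_PiE)
  have fL: "finite L" unfolding L_def by (rule finite_lists_length_eq) simp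
  have Zset: "{x::int^'n. (\<forall>i. 0 \<le> x$i \<and> x$i < int p) \<and> int p dvd FA A x} = {x\<in>S. int p dvd FA A x}"
    unfolding S_def T_def by auto
  have "int (num_zeros A p) = (\<Sum>x\<in>S. if int p dvd FA A x then 1 else 0)"
    unfolding num_zeros_def Zset using sum.inter_filter[OF fS, of "\<lambda>_. (1::int)"] by simp
  also have "[\<dots> = (\<Sum>x\<in>S. 1 - FA A x ^ N)] (mod int p)"
  proof (rule cong_sum)
    fix x assume "x \<in> S"
    show "[(if int p dvd FA A x then 1 else 0) = 1 - FA A x ^ N] (mod int p)"
    proof (cases "int p dvd FA A x")
      case True
      moreover have "FA A x dvd FA A x ^ N" using N0 by (simp add: dvd_power)
      ultimately have "int p dvd FA A x ^ N" using dvd_trans by blast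
      then show ?thesis using True by (simp add: cong_iff_dvd_diff)
    next
      case False
      then have "[FA A x ^ N = 1] (mod int p)" using fermat_int[OF p] unfolding N_def by blast
      then have "int p dvd FA A x ^ N - 1" by (simp add: cong_iff_dvd_diff)
      then show ?thesis using False by (simp add: cong_iff_dvd_diff)
    qed
  qed
  also have "(\<Sum>x\<in>S. 1 - FA A x ^ N) = (\<Sum>x\<in>S. 1) - (\<Sum>x\<in>S. FA A x ^ N)"
    by (simp add: sum_subtractf)
  finally have c1: "[int (num_zeros A p) = (\<Sum>x\<in>S. (1::int)) - (\<Sum>x\<in>S. FA A x ^ N)] (mod int p)" .
  have s1: "(\<Sum>x\<in>S. (1::int)) = (\<Prod>j\<in>(UNIV::'n set). \<Sum>y\<in>T. 1)"
    using vec_prod_sum[OF fT, of "\<lambda>j y. (1::int)"] unfolding S_def by simp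
  have c2: "[(\<Sum>x\<in>S. (1::int)) = 0] (mod int p)"
  proof -
    have "(\<Sum>x\<in>S. (1::int)) = int p ^ CARD('n)" unfolding s1 T_def by simp
    then show ?thesis by (simp add: cong_def)
  qed
  have "(\<Sum>x\<in>S. FA A x ^ N) = (\<Sum>x\<in>S. \<Sum>xs\<in>L. \<Prod>j\<in>UNIV. (x$j)^(ee A xs j))"
    unfolding L_def by (simp add: FA_pow)
  also have "\<dots> = (\<Sum>xs\<in>L. \<Sum>x\<in>S. \<Prod>j\<in>UNIV. (x$j)^(ee A xs j))"
    by (rule sum.swap)
  also have "\<dots> = (\<Sum>xs\<in>L. \<Prod>j\<in>UNIV. \<Sum>y\<in>T. y^(ee A xs j))"
  proof (rule sum.cong[OF refl])
    fix xs
    show "(\<Sum>x\<in>S. \<Prod>j\<in>UNIV. (x$j)^(ee A xs j)) = (\<Prod>j\<in>UNIV. \<Sum>y\<in>T. y^(ee A xs j))"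
      unfolding S_def using vec_prod_sum[OF fT, of "\<lambda>j y. y ^ ee A xs j"] by simp
  qed
  also have "[\<dots> = (\<Sum>xs\<in>L. \<Prod>j\<in>UNIV. P (ee A xs j))] (mod int p)"
    unfolding T_def P_def N_def by (intro cong_sum cong_prod psum[OF p])
  also have "(\<Sum>xs\<in>L. \<Prod>j\<in>UNIV. P (ee A xs j)) = (\<Sum>xs\<in>L. if good A N xs then (-1)^CARD('n) else 0)"
  proof (rule sum.cong[OF refl])
    fix xs
    show "(\<Prod>j\<in>UNIV. P (ee A xs j)) = (if good A N xs then (-1)^CARD('n) else 0)"
    proof (cases "good A N xs")
      case True
      then have "\<And>j. P (ee A xs j) = -1" unfolding P_def good_def by simp
      then show ?thesis using True by simp
    next
      case False
      then obtain j where "\<not> (0 < ee A xs j \<and> N dvd ee A xs j)" unfolding good_def by blast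
      then have "P (ee A xs j) = 0" unfolding P_def by simp
      then have "(\<Prod>j\<in>UNIV. P (ee A xs j)) = 0" by (auto simp: prod_zero_iff)
      then show ?thesis using False by simp
    qed
  qed
  also have "\<dots> = (-1)^CARD('n) * int (card {xs\<in>L. good A N xs})"
    using sum.inter_filter[OF fL, of "\<lambda>_. (-1::int)^CARD('n)" "good A N"] by (simp add: mult.commute)
  also have "{xs\<in>L. good A N xs} = {xs::'n list. set xs \<subseteq> UNIV \<and> length xs = N \<and> good A N xs}"
    unfolding L_def by auto
  finally have c3: "[(\<Sum>x\<in>S. FA A x ^ N) = (-1)^CARD('n) *
      (\<Sum>\<xi>\<in>{\<xi>\<in>Xi A. age \<xi> = 1 \<and> (\<forall>i. \<xi>$i \<ge> 0)}. nu_xi p \<xi>)] (mod int p)"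
    unfolding count_good[OF nonneg dA dvdN N0] pN .
  have c4: "[int (num_zeros A p) = 0 - (-1)^CARD('n) *
      (\<Sum>\<xi>\<in>{\<xi>\<in>Xi A. age \<xi> = 1 \<and> (\<forall>i. \<xi>$i \<ge> 0)}. nu_xi p \<xi>)] (mod int p)"
    using cong_trans[OF c1 cong_diff[OF c2 c3]] .
  have "(0::int) - (-1)^CARD('n) * (\<Sum>\<xi>\<in>{\<xi>\<in>Xi A. age \<xi> = 1 \<and> (\<forall>i. \<xi>$i \<ge> 0)}. nu_xi p \<xi>)
      = (-1) ^ (CARD('n) - 1) * (\<Sum>\<xi>\<in>{\<xi>\<in>Xi A. age \<xi> = 1 \<and> (\<forall>i. \<xi>$i \<ge> 0)}. nu_xi p \<xi>)"
  proof -
    have "CARD('n) = Suc (CARD('n) - 1)" using finite_UNIV_card_ge_0 by simp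
    then have "(-1::int)^CARD('n) = - ((-1) ^ (CARD('n) - 1))" by (metis power_Suc mult_minus1)
    then show ?thesis by simp
  qed
  then show ?thesis using c4 by simp
qed

end
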